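(* Let $a\ge2$ be real and $\widetilde{\mathcal Z}=\widetilde R_{a,1}\cup\widetilde R_{1,a}$. Then for all $\alpha\in[0,1]$, $$2(a-1)\big((1-\alpha)-2(1-\alpha)^2\big)\le\widetilde I(\alpha,\alpha,\widetilde{\mathcal Z})\le2(a-1)(1-\alpha).$$
   Context: $\widetilde R_{a,b}=[0,a]\times[0,b]$. A Euclidean zero-set is a closed $\widetilde{\mathcal Z}\subseteq[0,\infty)^2$ such that $(a,b)\in\widetilde{\mathcal Z}$ implies $\widetilde R_{a,b}\subseteq\widetilde{\mathcal Z}$, and $\widetilde{\mathcal Z}$ is the closure of $\widetilde{\mathcal Z}\cap(0,\infty)^2$. For Borel $A\subseteq[0,\infty)^2$, $\widetilde{\mathrm{row}}(x,A)$ (resp. $\widetilde{\mathrm{col}}(x,A)$) is the 1-dimensional Lebesgue measure of $A$ intersected with the horizontal (resp. vertical) line through $x$. For left-continuous nonincreasing $f,g:[0,\infty)\to[0,\infty)$ of compact support, $\widetilde{\mathcal T}(A)=A\cup\{(u,v):(\widetilde{\mathrm{row}}((u,v),A)+f(v),\widetilde{\mathrm{col}}((u,v),A)+g(u))\notin\widetilde{\mathcal Z}\}$; $A$ E-spans for $(\widetilde{\mathcal Z},f,g)$ if $\bigcup_n\widetilde{\mathcal T}^n(A)=[0,\infty)^2$. For bounded $\widetilde{\mathcal Z}$ and $(\alpha,\beta)\in[0,1]^2$: $\widetilde I(\alpha,\beta,\widetilde{\mathcal Z})=\inf\{\mathrm{area}(A)+(1-\alpha)\int_0^\infty f+(1-\beta)\int_0^\infty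 g\}$ over all $(A,f,g)$ with $A$ compact E-spanning for $(\widetilde{\mathcal Z},f,g)$. *)

theory Defs
  imports "HOL-Analysis.Analysis"
begin

definition ERect :: "real \<Rightarrow> real \<Rightarrow> (real \<times> real) set" where
  "ERect a b = {0..a} \<times> {0..b}"

definition quadrant :: "(real \<times> real) set" where
  "quadrant = {p. fst p \<ge> 0 \<and> snd p \<ge> 0}"

definition euclid_zero_set :: "(real \<times> real) set \<Rightarrow> bool" where
  "euclid_zero_set Z \<longleftrightarrow> closed Z \<and> Z \<subseteq> quadrant \<and>
     (\<forall>a b. (a, b) \<in> Z \<longrightarrow> ERect a b \<subseteq> Z) \<and>
     Z = closure (Z \<inter> {p. fst p > 0 \<and> snd p > 0})"

definition Erow :: "real \<times> real \<Rightarrow> (real \<times> real) set \<Rightarrow> ennreal" where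
  "Erow p A = emeasure lborel {x. (x, snd p) \<in> A}"

definition Ecol :: "real \<times> real \<Rightarrow> (real \<times> real) set \<Rightarrow> ennreal" where
  "Ecol p A = emeasure lborel {y. (fst p, y) \<in> A}"

text \<open>Membership of an extended pair in Z (infinite coordinates are never in a bounded Z).\<close>
definition in_zset :: "(real \<times> real) set \<Rightarrow> ennreal \<Rightarrow> ennreal \<Rightarrow> bool" where
  "in_zset Z x y \<longleftrightarrow> x \<noteq> \<infinity> \<and> y \<noteq> \<infinity> \<and> (enn2real x, enn2real y) \<in> Z"

definition admissible_fn :: "(real \<Rightarrow> real) \<Rightarrow> bool" where
  "admissible_fn f \<longleftrightarrow>
     (\<forall>x\<ge>0. f x \<ge> 0) \<and>
     (\<forall>x y. 0 \<le> x \<longrightarrow> x \<le> y \<longrightarrow> f y \<le> f x) \<and>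
     (\<forall>x>0. (f \<longlongrightarrow> f x) (at_left x)) \<and>
     (\<exists>M. \<forall>x\<ge>M. f x = 0)"

definition ET :: "(real \<times> real) set \<Rightarrow> (real \<Rightarrow> real) \<Rightarrow> (real \<Rightarrow> real)
                  \<Rightarrow> (real \<times> real) set \<Rightarrow> (real \<times> real) set" where
  "ET Z f g A = A \<union> {(u, v). u \<ge> 0 \<and> v \<ge> 0 \<and>
       \<not> in_zset Z (Erow (u, v) A + ennreal (f v)) (Ecol (u, v) A + ennreal (g u))}"

definition E_spans :: "(real \<times> real) set \<Rightarrow> (real \<Rightarrow> real) \<Rightarrow> (real \<Rightarrow> real)
                       \<Rightarrow> (real \<times> real) set \<Rightarrow> bool" where
  "E_spans Z f g A \<longleftrightarrow> (\<Union>n. (ET Z f g ^^ n) A) = quadrant"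

definition EI :: "real \<Rightarrow> real \<Rightarrow> (real \<times> real) set \<Rightarrow> real" where
  "EI \<alpha> \<beta> Z = Inf {measure lborel A + (1 - \<alpha>) * integral {0..} f + (1 - \<beta>) * integral {0..} g
      | A f g. compact A \<and> A \<subseteq> quadrant \<and> admissible_fn f \<and> admissible_fn g \<and> E_spans Z f g A}"

end

theory Submission
  imports Defs
begin


lemma adm_basic:
  assumes "admissible_fn f"
  shows "\<exists>M\<ge>0. \<forall>x\<ge>M. f x = 0"
    and "\<And>x. 0 \<le> x \<Longrightarrow> 0 \<le> f x"
    and "\<And>x y. 0 \<le> x \<Longrightarrow> x \<le> y \<Longrightarrow> f y \<le> f x"
proof -
  obtain M where "\<forall>x\<ge>M. f x = 0" using assms unfolding admissible_fn_def by blast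
  then show "\<exists>M\<ge>0. \<forall>x\<ge>M. f x = 0" by (intro exI[of _ "max M 0"]) auto
next
  fix x :: real assume "0 \<le> x" then show "0 \<le> f x" using assms unfolding admissible_fn_def by blast
next
  fix x y :: real assume "0 \<le> x" "x \<le> y" then show "f y \<le> f x" using assms unfolding admissible_fn_def by blast
qed

lemma adm_meas:
  assumes "admissible_fn f"
  shows "(\<lambda>v. f (max v 0)) \<in> borel_measurable borel"
proof -
  have "mono (\<lambda>v. - f (max v 0))"
    using adm_basic(3)[OF assms] by (auto simp: mono_def max_def)
  then have "(\<lambda>v. - f (max v 0)) \<in> borel_measurable borel" by (rule borel_measurable_mono)
  then have "(\<lambda>v. - (- f (max v 0))) \<in> borel_measurable borel" by measurable
  then show ?thesis by simp
qed

lemma adm_integral: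
  assumes "admissible_fn f"
  shows "(f has_integral integral {0..} f) {0..}" and "0 \<le> integral {0..} f"
    and "(\<integral>\<^sup>+ v. ennreal (f v) * indicator {0..} v \<partial>lborel) = ennreal (integral {0..} f)"
proof -
  obtain M where M: "M \<ge> 0" "\<forall>x\<ge>M. f x = 0" using adm_basic(1)[OF assms] by blast
  have "mono_on {0..M} (\<lambda>x. - f x)"
    using adm_basic(3)[OF assms] by (auto simp: mono_on_def)
  then have "(\<lambda>x. - f x) integrable_on {0..M}" by (rule integrable_on_mono_on)
  then have "(\<lambda>x. - (- f x)) integrable_on {0..M}" by (rule integrable_neg)
  then have i1: "f integrable_on {0..M}" by simp
  define f2 where "f2 x = (if x \<in> {0..M} then f x else 0)" for x
  have "f2 integrable_on {0..M}"
    using i1 by (rule integrable_eq) (simp add: f2_def)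
  then have "f2 integrable_on {0..}"
    by (rule integrable_on_superset) (auto simp: f2_def)
  then have "f integrable_on {0..}"
    by (rule integrable_eq) (auto simp: f2_def M)
  then show hi: "(f has_integral integral {0..} f) {0..}" by (simp add: has_integral_integral)
  show "0 \<le> integral {0..} f"
    using hi adm_basic(2)[OF assms] by (intro has_integral_nonneg[OF hi]) auto
  show "(\<integral>\<^sup>+ v. ennreal (f v) * indicator {0..} v \<partial>lborel) = ennreal (integral {0..} f)"
    using adm_basic(2)[OF assms] hi by (intro nn_integral_has_integral_lebesgue') auto
qed



lemma sets_prod_lborel: "sets (lborel \<Otimes>\<^sub>M lborel) = sets (lborel :: (real \<times> real) measure)"
  by (simp only: lborel_prod)

lemma A_sets:
  fixes A :: "(real \<times> real) set"
  assumes "closed A"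
  shows "A \<in> sets (lborel \<Otimes>\<^sub>M lborel)"
  unfolding sets_prod_lborel using assms by simp

lemma row_sets:
  fixes A :: "(real \<times> real) set"
  assumes "closed A"
  shows "{x. (x, v) \<in> A} \<in> sets lborel" "{y. (u, y) \<in> A} \<in> sets lborel"
proof -
  have "closed ((\<lambda>x. (x, v)) -` A)"
    by (intro continuous_closed_vimage assms) (auto intro!: continuous_intros)
  then show "{x. (x, v) \<in> A} \<in> sets lborel" by (simp add: vimage_def)
  have "closed ((\<lambda>y. (u, y)) -` A)"
    by (intro continuous_closed_vimage assms) (auto intro!: continuous_intros)
  then show "{y. (u, y) \<in> A} \<in> sets lborel" by (simp add: vimage_def)
qed

lemma row_meas:
  fixes A :: "(real \<times> real) set"
  assumes "closed A"
  shows "(\<lambda>v. emeasure lborel {x. (x, v) \<in> A}) \<in> borel_measurable lborel"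
    and "(\<lambda>u. emeasure lborel {y. (u, y) \<in> A}) \<in> borel_measurable lborel"
proof -
  show "(\<lambda>v. emeasure lborel {x. (x, v) \<in> A}) \<in> borel_measurable lborel"
    using lborel_pair.measurable_emeasure_Pair2[OF A_sets[OF assms]] by (simp add: vimage_def)
  show "(\<lambda>u. emeasure lborel {y. (u, y) \<in> A}) \<in> borel_measurable lborel"
    using lborel_pair.measurable_emeasure_Pair1[OF A_sets[OF assms]] by (simp add: vimage_def)
qed

lemma row_int:
  fixes A :: "(real \<times> real) set"
  assumes "closed A"
  shows "(\<integral>\<^sup>+ v. emeasure lborel {x. (x, v) \<in> A} \<partial>lborel) = emeasure lborel A"
    and "(\<integral>\<^sup>+ u. emeasure lborel {y. (u, y) \<in> A} \<partial>lborel) = emeasure lborel A"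
proof -
  show "(\<integral>\<^sup>+ v. emeasure lborel {x. (x, v) \<in> A} \<partial>lborel) = emeasure lborel A"
    using lborel_pair.emeasure_pair_measure_alt2[OF A_sets[OF assms]] by (simp add: vimage_def lborel_prod)
  show "(\<integral>\<^sup>+ u. emeasure lborel {y. (u, y) \<in> A} \<partial>lborel) = emeasure lborel A"
    using lborel.emeasure_pair_measure_alt[OF A_sets[OF assms]] by (simp add: vimage_def lborel_prod)
qed

lemma row_zero:
  fixes A :: "(real \<times> real) set"
  assumes "bounded A"
  obtains B where "B \<ge> 0" "\<And>v. v > B \<Longrightarrow> emeasure lborel {x. (x, v) \<in> A} = 0"
    "\<And>u. u > B \<Longrightarrow> emeasure lborel {y. (u, y) \<in> A} = 0" "\<And>p. p \<in> A \<Longrightarrow> fst p \<le> B \<and> snd p \<le> B"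
proof -
  obtain B where B: "\<And>p. p \<in> A \<Longrightarrow> norm p \<le> B" using assms bounded_iff by blast
  have fs: "fst p \<le> max B 0 \<and> snd p \<le> max B 0" if "p \<in> A" for p
  proof -
    have "norm p \<le> B" using B that by blast
    moreover have "\<bar>fst p\<bar> \<le> norm p" "\<bar>snd p\<bar> \<le> norm p"
      using norm_fst_le[of "fst p" "snd p"] norm_snd_le[of "snd p" "fst p"] norm_snd_le[of "fst p" "snd p"] by auto
    ultimately show ?thesis by auto
  qed
  show ?thesis
  proof (rule that[of "max B 0"])
    fix v assume "v > max B 0"
    then have "{x. (x, v) \<in> A} = {}" using fs by fastforce
    then show "emeasure lborel {x. (x, v) \<in> A} = 0" by simp
  next
    fix u assume "u > max B 0"
    then have "{y. (u, y) \<in> A} = {}" using fs by fastforce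
    then show "emeasure lborel {y. (u, y) \<in> A} = 0" by simp
  qed (use fs in auto)
qed



lemma enn_le_real: "x \<le> ennreal a \<Longrightarrow> 0 \<le> a \<Longrightarrow> x \<noteq> \<infinity> \<and> enn2real x \<le> a"
  by (cases x rule: ennreal_cases) (auto simp: ennreal_le_iff top_unique)

lemma in_zset_ok:
  assumes "0 \<le> a"
    and "(x \<le> ennreal a \<and> y \<le> ennreal 1) \<or> (x \<le> ennreal 1 \<and> y \<le> ennreal a)"
  shows "in_zset (ERect a 1 \<union> ERect 1 a) x y"
  using assms enn_le_real[of x a] enn_le_real[of y 1] enn_le_real[of x 1] enn_le_real[of y a]
  unfolding in_zset_def ERect_def by auto

lemma emeasure_le_sup:
  assumes "B \<subseteq> C" "C \<in> sets M"
  shows "emeasure M B \<le> emeasure M C"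
proof (cases "B \<in> sets M")
  case True then show ?thesis using assms emeasure_mono by blast
next
  case False then show ?thesis by (simp add: emeasure_notin_sets)
qed

lemma no_span:
  fixes A :: "(real \<times> real) set" and X Y :: "real set"
  assumes cA: "closed A" and bA: "bounded A" and qA: "A \<subseteq> quadrant"
    and sX: "X \<in> sets lborel" and sY: "Y \<in> sets lborel" and XR: "X \<subseteq> {..R}" and YR: "Y \<subseteq> {..R}"
    and a0: "0 \<le> a"
    and bnd: "\<And>u v. 0 \<le> u \<Longrightarrow> 0 \<le> v \<Longrightarrow> u \<notin> X \<Longrightarrow> v \<notin> Y \<Longrightarrow>
     (emeasure lborel X + emeasure lborel {x. (x,v)\<in>A} + ennreal (f v) \<le> ennreal a \<and>
      emeasure lborel Y + emeasure lborel {y. (u,y)\<in>A} + ennreal (g u) \<le> ennreal 1) \<or>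
     (emeasure lborel X + emeasure lborel {x. (x,v)\<in>A} + ennreal (f v) \<le> ennreal 1 \<and>
      emeasure lborel Y + emeasure lborel {y. (u,y)\<in>A} + ennreal (g u) \<le> ennreal a)"
  shows "\<not> E_spans (ERect a 1 \<union> ERect 1 a) f g A"
proof
  assume sp: "E_spans (ERect a 1 \<union> ERect 1 a) f g A"
  define W where "W = {(u,v). 0 \<le> u \<and> 0 \<le> v \<and> ((u,v) \<in> A \<or> u \<in> X \<or> v \<in> Y)}"
  have step: "ET (ERect a 1 \<union> ERect 1 a) f g S \<subseteq> W" if SW: "S \<subseteq> W" for S
  proof
    fix p assume p: "p \<in> ET (ERect a 1 \<union> ERect 1 a) f g S"
    obtain u v where pe: "p = (u,v)" by (cases p)
    show "p \<in> W"
    proof (rule ccontr)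
      assume nW: "p \<notin> W"
      then have nS: "(u,v) \<notin> S" using SW pe by blast
      with p pe have uv: "0 \<le> u" "0 \<le> v"
        and nz: "\<not> in_zset (ERect a 1 \<union> ERect 1 a) (Erow (u, v) S + ennreal (f v)) (Ecol (u, v) S + ennreal (g u))"
        unfolding ET_def by auto
      from nW uv pe have nX: "u \<notin> X" and nY: "v \<notin> Y" and nA: "(u,v) \<notin> A" unfolding W_def by auto
      have "{x. (x, v) \<in> S} \<subseteq> X \<union> {x. (x, v) \<in> A}" using SW nY unfolding W_def by auto
      then have "Erow (u,v) S \<le> emeasure lborel (X \<union> {x. (x, v) \<in> A})"
        unfolding Erow_def using sX row_sets[OF cA] by (intro emeasure_le_sup) auto
      also have "\<dots> \<le> emeasure lborel X + emeasure lborel {x. (x, v) \<in> A}"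
        using sX row_sets[OF cA] by (intro emeasure_subadditive) auto
      finally have r: "Erow (u,v) S + ennreal (f v) \<le> emeasure lborel X + emeasure lborel {x. (x, v) \<in> A} + ennreal (f v)"
        by (rule add_right_mono)
      have "{y. (u, y) \<in> S} \<subseteq> Y \<union> {y. (u, y) \<in> A}" using SW nX unfolding W_def by auto
      then have "Ecol (u,v) S \<le> emeasure lborel (Y \<union> {y. (u, y) \<in> A})"
        unfolding Ecol_def using sY row_sets[OF cA] by (intro emeasure_le_sup) auto
      also have "\<dots> \<le> emeasure lborel Y + emeasure lborel {y. (u, y) \<in> A}"
        using sY row_sets[OF cA] by (intro emeasure_subadditive) auto
      finally have c: "Ecol (u,v) S + ennreal (g u) \<le> emeasure lborel Y + emeasure lborel {y. (u, y) \<in> A} + ennreal (g u)"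
        by (rule add_right_mono)
      have "in_zset (ERect a 1 \<union> ERect 1 a) (Erow (u, v) S + ennreal (f v)) (Ecol (u, v) S + ennreal (g u))"
        apply (rule in_zset_ok[OF a0])
        using bnd[OF uv nX nY] r c by (meson order_trans)
      with nz show False by blast
    qed
  qed
  have AW: "A \<subseteq> W" using qA unfolding W_def quadrant_def by auto
  have all: "(ET (ERect a 1 \<union> ERect 1 a) f g ^^ n) A \<subseteq> W" for n
    by (induction n) (use AW step in auto)
  obtain B where B: "B \<ge> 0" "\<And>p. p \<in> A \<Longrightarrow> fst p \<le> B \<and> snd p \<le> B"
    using row_zero[OF bA] by metis
  define w where "w = max B R + 1"
  have "(w, w) \<in> quadrant" using B(1) unfolding w_def quadrant_def by auto
  then have "(w, w) \<in> W" using sp all unfolding E_spans_def by blast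
  moreover have "(w, w) \<notin> A" using B(2)[of "(w,w)"] unfolding w_def by auto
  moreover have "w \<notin> X" "w \<notin> Y" using XR YR unfolding w_def by auto
  ultimately show False unfolding W_def by auto
qed



lemma sec1: "emeasure lborel {s::real. 0 < s \<and> s \<le> a \<and> ennreal (a - s) < c} \<le> c"
proof (cases c rule: ennreal_cases)
  case (real r)
  have "{s::real. 0 < s \<and> s \<le> a \<and> ennreal (a - s) < c} \<subseteq> {a - r <.. a}"
    using real by (auto simp: ennreal_less_iff)
  then have "emeasure lborel {s::real. 0 < s \<and> s \<le> a \<and> ennreal (a - s) < c} \<le> emeasure lborel {a - r <.. a}"
    by (intro emeasure_mono) auto
  also have "\<dots> = c" using real by simp
  finally show ?thesis .
qed simp

lemma sec2: "emeasure lborel {t::real. 0 < t \<and> t \<le> 1 \<and> ennreal (1 - t) < c} \<le> min 1 c"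
proof -
  have "emeasure lborel {t::real. 0 < t \<and> t \<le> 1 \<and> ennreal (1 - t) < c} \<le> c"
    using sec1[of 1 c] by simp
  moreover have "emeasure lborel {t::real. 0 < t \<and> t \<le> 1 \<and> ennreal (1 - t) < c} \<le> emeasure lborel {0<..(1::real)}"
    by (intro emeasure_mono) auto
  ultimately show ?thesis by simp
qed

lemma core:
  fixes \<phi> \<psi> :: "real \<Rightarrow> ennreal"
  assumes m\<phi>[measurable]: "\<phi> \<in> borel_measurable lborel" and m\<psi>[measurable]: "\<psi> \<in> borel_measurable lborel"
    and a1: "1 \<le> a"
    and C: "\<And>t s. 0 < t \<Longrightarrow> t \<le> 1 \<Longrightarrow> 0 < s \<Longrightarrow> s \<le> a \<Longrightarrow> ennreal (a - s) < \<psi> t \<or> ennreal (1 - t) < \<phi> s"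
  shows "ennreal a \<le> (\<integral>\<^sup>+ t. \<psi> t * indicator {0<..1} t \<partial>lborel) + 1 + (\<integral>\<^sup>+ s. \<phi> s * indicator {1<..a} s \<partial>lborel)"
proof -
  define R1 where "R1 = {(t,s). 0<t \<and> t\<le>1 \<and> 0<s \<and> s\<le>a \<and> ennreal (a-s) < \<psi> t}"
  define R2 where "R2 = {(t,s). 0<t \<and> t\<le>1 \<and> 0<s \<and> s\<le>a \<and> ennreal (1-t) < \<phi> s}"
  have sR1: "R1 \<in> sets (lborel \<Otimes>\<^sub>M lborel)"
  proof -
    have e: "R1 = {x \<in> space (lborel \<Otimes>\<^sub>M lborel). 0 < fst x \<and> fst x \<le> 1 \<and> 0 < snd x \<and> snd x \<le> a \<and> ennreal (a - snd x) < \<psi> (fst x)}"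
      unfolding R1_def by (auto simp: space_pair_measure)
    show ?thesis unfolding e by measurable
  qed
  have sR2: "R2 \<in> sets (lborel \<Otimes>\<^sub>M lborel)"
  proof -
    have e: "R2 = {x \<in> space (lborel \<Otimes>\<^sub>M lborel). 0 < fst x \<and> fst x \<le> 1 \<and> 0 < snd x \<and> snd x \<le> a \<and> ennreal (1 - fst x) < \<phi> (snd x)}"
      unfolding R2_def by (auto simp: space_pair_measure)
    show ?thesis unfolding e by measurable
  qed
  have "ennreal a = emeasure (lborel \<Otimes>\<^sub>M lborel) ({0<..1::real} \<times> {0<..a})"
    using a1 by (subst lborel.emeasure_pair_measure_Times) auto
  also have "\<dots> \<le> emeasure (lborel \<Otimes>\<^sub>M lborel) (R1 \<union> R2)"
    using sR1 sR2 C by (intro emeasure_mono) (force simp: R1_def R2_def)+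
  also have "\<dots> \<le> emeasure (lborel \<Otimes>\<^sub>M lborel) R1 + emeasure (lborel \<Otimes>\<^sub>M lborel) R2"
    using sR1 sR2 by (rule emeasure_subadditive)
  also have "emeasure (lborel \<Otimes>\<^sub>M lborel) R1 \<le> (\<integral>\<^sup>+ t. \<psi> t * indicator {0<..1} t \<partial>lborel)"
  proof -
    have "emeasure (lborel \<Otimes>\<^sub>M lborel) R1 = (\<integral>\<^sup>+ t. emeasure lborel (Pair t -` R1) \<partial>lborel)"
      using sR1 by (rule lborel.emeasure_pair_measure_alt)
    also have "\<dots> \<le> (\<integral>\<^sup>+ t. \<psi> t * indicator {0<..1} t \<partial>lborel)"
    proof (rule nn_integral_mono)
      fix t :: real
      show "emeasure lborel (Pair t -` R1) \<le> \<psi> t * indicator {0<..1} t"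
      proof (cases "0 < t \<and> t \<le> 1")
        case True
        then have "Pair t -` R1 = {s. 0 < s \<and> s \<le> a \<and> ennreal (a - s) < \<psi> t}"
          unfolding R1_def by auto
        then show ?thesis using True sec1[of a "\<psi> t"] by (simp add: indicator_def)
      next
        case False
        then have "Pair t -` R1 = {}" unfolding R1_def by auto
        then show ?thesis by simp
      qed
    qed
    finally show ?thesis .
  qed
  also have "emeasure (lborel \<Otimes>\<^sub>M lborel) R2 \<le> 1 + (\<integral>\<^sup>+ s. \<phi> s * indicator {1<..a} s \<partial>lborel)"
  proof -
    have "emeasure (lborel \<Otimes>\<^sub>M lborel) R2 = (\<integral>\<^sup>+ s. emeasure lborel ((\<lambda>t. (t, s)) -` R2) \<partial>lborel)"
      using sR2 by (rule lborel_pair.emeasure_pair_measure_alt2)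
    also have "\<dots> \<le> (\<integral>\<^sup>+ s. indicator {0<..1} s + \<phi> s * indicator {1<..a} s \<partial>lborel)"
    proof (rule nn_integral_mono)
      fix s :: real
      show "emeasure lborel ((\<lambda>t. (t, s)) -` R2) \<le> indicator {0<..1} s + \<phi> s * indicator {1<..a} s"
      proof (cases "0 < s \<and> s \<le> a")
        case True
        then have e: "(\<lambda>t. (t, s)) -` R2 = {t. 0 < t \<and> t \<le> 1 \<and> ennreal (1 - t) < \<phi> s}"
          unfolding R2_def by auto
        show ?thesis
        proof (cases "s \<le> 1")
          case True
          then show ?thesis using e \<open>0 < s \<and> s \<le> a\<close> sec2[of "\<phi> s"]
            by (simp add: indicator_def)
        next
          case False
          then show ?thesis using e \<open>0 < s \<and> s \<le> a\<close> sec2[of "\<phi> s"]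
            by (simp add: indicator_def)
        qed
      next
        case False
        then have "(\<lambda>t. (t, s)) -` R2 = {}" unfolding R2_def by auto
        then show ?thesis by simp
      qed
    qed
    also have "\<dots> = 1 + (\<integral>\<^sup>+ s. \<phi> s * indicator {1<..a} s \<partial>lborel)"
    proof -
      have i1: "(\<integral>\<^sup>+ s. indicator {0<..1::real} s \<partial>lborel) = 1" by simp
      show ?thesis
        using nn_integral_add[of "\<lambda>s. indicator {0<..1::real} s" lborel "\<lambda>s. \<phi> s * indicator {1<..a} s"] i1
        by simp
    qed
    finally show ?thesis .
  qed
  finally show ?thesis by (simp add: add.assoc)
qed



lemma phi_meas:
  fixes p :: "real \<Rightarrow> ennreal"
  assumes [measurable]: "p \<in> borel_measurable lborel"
  shows "(\<lambda>t. emeasure lborel {v. ennreal t < p v}) \<in> borel_measurable lborel"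
proof -
  define E where "E = {x \<in> space (lborel \<Otimes>\<^sub>M lborel). ennreal (snd x) < p (fst x)}"
  have sE: "E \<in> sets (lborel \<Otimes>\<^sub>M lborel)" unfolding E_def by measurable
  have "(\<lambda>t. emeasure lborel ((\<lambda>v. (v, t)) -` E)) \<in> borel_measurable lborel"
    by (rule lborel_pair.measurable_emeasure_Pair2[OF sE])
  moreover have "(\<lambda>v. (v, t)) -` E = {v. ennreal t < p v}" for t
    unfolding E_def by (auto simp: space_pair_measure)
  ultimately show ?thesis by simp
qed

lemma layer:
  fixes p :: "real \<Rightarrow> ennreal"
  assumes [measurable]: "p \<in> borel_measurable lborel"
  shows "(\<integral>\<^sup>+ t. emeasure lborel {v. ennreal t < p v} * indicator {0<..} t \<partial>lborel) \<le> (\<integral>\<^sup>+ v. p v \<partial>lborel)"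
proof -
  define E where "E = {x \<in> space (lborel \<Otimes>\<^sub>M lborel). 0 < snd x \<and> ennreal (snd x) < p (fst x)}"
  have sE: "E \<in> sets (lborel \<Otimes>\<^sub>M lborel)" unfolding E_def by measurable
  have "(\<integral>\<^sup>+ t. emeasure lborel {v. ennreal t < p v} * indicator {0<..} t \<partial>lborel)
      = (\<integral>\<^sup>+ t. emeasure lborel ((\<lambda>v. (v, t)) -` E) \<partial>lborel)"
  proof (rule nn_integral_cong)
    fix t :: real
    show "emeasure lborel {v. ennreal t < p v} * indicator {0<..} t = emeasure lborel ((\<lambda>v. (v, t)) -` E)"
    proof (cases "0 < t")
      case True
      then have "(\<lambda>v. (v, t)) -` E = {v. ennreal t < p v}" unfolding E_def by (auto simp: space_pair_measure)
      then show ?thesis using True by simp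
    next
      case False
      then have "(\<lambda>v. (v, t)) -` E = {}" unfolding E_def by (auto simp: space_pair_measure)
      then show ?thesis using False by simp
    qed
  qed
  also have "\<dots> = emeasure (lborel \<Otimes>\<^sub>M lborel) E"
    using sE by (rule lborel_pair.emeasure_pair_measure_alt2[symmetric])
  also have "\<dots> = (\<integral>\<^sup>+ v. emeasure lborel (Pair v -` E) \<partial>lborel)"
    using sE by (rule lborel.emeasure_pair_measure_alt)
  also have "\<dots> \<le> (\<integral>\<^sup>+ v. p v \<partial>lborel)"
  proof (rule nn_integral_mono)
    fix v :: real
    have e: "Pair v -` E = {t. 0 < t \<and> ennreal t < p v}" unfolding E_def by (auto simp: space_pair_measure)
    show "emeasure lborel (Pair v -` E) \<le> p v"
    proof (cases "p v" rule: ennreal_cases)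
      case (real r)
      have "{t. 0 < t \<and> ennreal t < p v} \<subseteq> {0<..r}" using real by (auto simp: ennreal_less_iff)
      then have "emeasure lborel {t. 0 < t \<and> ennreal t < p v} \<le> emeasure lborel {0<..r}"
        by (intro emeasure_mono) auto
      then show ?thesis using e real by simp
    qed simp
  qed
  finally show ?thesis .
qed



lemma enn_sum_le: "x \<le> ennreal r \<Longrightarrow> y \<le> ennreal s \<Longrightarrow> 0 \<le> r \<Longrightarrow> 0 \<le> s \<Longrightarrow> x + y \<le> ennreal (r + s)"
  by (metis add_mono ennreal_plus)

lemma lower_key:
  fixes A :: "(real \<times> real) set"
  assumes a1: "1 \<le> a" and cA: "compact A" and qA: "A \<subseteq> quadrant"
    and af: "admissible_fn f" and ag: "admissible_fn g"
    and sp: "E_spans (ERect a 1 \<union> ERect 1 a) f g A"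
  shows "2 * a \<le> integral {0..} f + integral {0..} g + 2 * measure lborel A + 2"
proof -
  have clA: "closed A" and bA: "bounded A" using cA compact_imp_closed compact_imp_bounded by auto
  define p where "p v = ennreal (f (max v 0)) * indicator {0..} v + emeasure lborel {x. (x,v)\<in>A}" for v
  define q where "q u = ennreal (g (max u 0)) * indicator {0..} u + emeasure lborel {y. (u,y)\<in>A}" for u
  define \<phi> where "\<phi> t = emeasure lborel {v. ennreal t < p v}" for t
  define \<psi> where "\<psi> t = emeasure lborel {u. ennreal t < q u}" for t
  have mf[measurable]: "(\<lambda>v. f (max v 0)) \<in> borel_measurable lborel" using adm_meas[OF af] by simp
  have mg[measurable]: "(\<lambda>v. g (max v 0)) \<in> borel_measurable lborel" using adm_meas[OF ag] by simp
  have mH[measurable]: "(\<lambda>v. emeasure lborel {x. (x, v) \<in> A}) \<in> borel_measurable lborel"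
    and mK[measurable]: "(\<lambda>u. emeasure lborel {y. (u, y) \<in> A}) \<in> borel_measurable lborel"
    using row_meas[OF clA] by auto
  have mp[measurable]: "p \<in> borel_measurable lborel" unfolding p_def by measurable
  have mq[measurable]: "q \<in> borel_measurable lborel" unfolding q_def by measurable
  have m\<phi>[measurable]: "\<phi> \<in> borel_measurable lborel" unfolding \<phi>_def by (rule phi_meas[OF mp])
  have m\<psi>[measurable]: "\<psi> \<in> borel_measurable lborel" unfolding \<psi>_def by (rule phi_meas[OF mq])
  obtain Mf where Mf: "Mf \<ge> 0" "\<forall>x\<ge>Mf. f x = 0" using adm_basic(1)[OF af] by blast
  obtain Mg where Mg: "Mg \<ge> 0" "\<forall>x\<ge>Mg. g x = 0" using adm_basic(1)[OF ag] by blast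
  obtain B where B: "B \<ge> 0" "\<And>v. v > B \<Longrightarrow> emeasure lborel {x. (x, v) \<in> A} = 0"
    "\<And>u. u > B \<Longrightarrow> emeasure lborel {y. (u, y) \<in> A} = 0"
    using row_zero[OF bA] by metis
  define R where "R = max (max Mf Mg) B"
  have p0: "p v = 0" if "v > R" for v
    using that Mf B(2)[of v] unfolding p_def R_def by (auto simp: indicator_def)
  have q0: "q u = 0" if "u > R" for u
    using that Mg B(3)[of u] unfolding q_def R_def by (auto simp: indicator_def)
  have pv: "p v = ennreal (f v) + emeasure lborel {x. (x,v)\<in>A}" if "0 \<le> v" for v
    using that unfolding p_def by (simp add: max_def)
  have qu: "q u = ennreal (g u) + emeasure lborel {y. (u,y)\<in>A}" if "0 \<le> u" for u
    using that unfolding q_def by (simp add: max_def)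
  have Xb: "{u. ennreal t < q u} \<subseteq> {..R}" if "0 < t" for t
  proof
    fix u assume "u \<in> {u. ennreal t < q u}" then show "u \<in> {..R}" using q0[of u] by (cases "u \<le> R") auto
  qed
  have Yb: "{v. ennreal t < p v} \<subseteq> {..R}" if "0 < t" for t
  proof
    fix u assume "u \<in> {u. ennreal t < p u}" then show "u \<in> {..R}" using p0[of u] by (cases "u \<le> R") auto
  qed
  have sX: "{u. ennreal t < q u} \<in> sets lborel" for t
  proof -
    have "{u \<in> space lborel. ennreal t < q u} \<in> sets lborel" by measurable
    then show ?thesis by simp
  qed
  have sY: "{v. ennreal t < p v} \<in> sets lborel" for t
  proof -
    have "{v \<in> space lborel. ennreal t < p v} \<in> sets lborel" by measurable
    then show ?thesis by simp
  qed
  have a0: "0 \<le> a" using a1 by simp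
  have C1: "ennreal (a - s) < \<psi> t \<or> ennreal (1 - t) < \<phi> s"
    if "0 < t" "t \<le> 1" "0 < s" "s \<le> a" for t s
  proof (rule ccontr)
    assume "\<not> ?thesis"
    then have h1: "\<psi> t \<le> ennreal (a - s)" and h2: "\<phi> s \<le> ennreal (1 - t)" by auto
    have "\<not> E_spans (ERect a 1 \<union> ERect 1 a) f g A"
    proof (rule no_span[OF clA bA qA sX sY Xb[OF \<open>0<t\<close>] Yb[OF \<open>0<s\<close>] a0], rule disjI1, rule conjI)
      fix u v :: real assume uv: "0 \<le> u" "0 \<le> v" "u \<notin> {u. ennreal t < q u}" "v \<notin> {v. ennreal s < p v}"
      have "emeasure lborel {u. ennreal t < q u} + emeasure lborel {x. (x, v) \<in> A} + ennreal (f v)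
          = \<psi> t + p v" using pv[OF uv(2)] unfolding \<psi>_def by (simp add: ac_simps)
      also have "\<dots> \<le> ennreal (a - s + s)" using uv h1 that by (intro enn_sum_le) auto
      finally show "emeasure lborel {u. ennreal t < q u} + emeasure lborel {x. (x, v) \<in> A} + ennreal (f v) \<le> ennreal a" by simp
      have "emeasure lborel {v. ennreal s < p v} + emeasure lborel {y. (u, y) \<in> A} + ennreal (g u)
          = \<phi> s + q u" using qu[OF uv(1)] unfolding \<phi>_def by (simp add: ac_simps)
      also have "\<dots> \<le> ennreal (1 - t + t)" using uv h2 that by (intro enn_sum_le) auto
      finally show "emeasure lborel {v. ennreal s < p v} + emeasure lborel {y. (u, y) \<in> A} + ennreal (g u) \<le> ennreal 1" by simp
    qed
    with sp show False by blast
  qed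
  have C2: "ennreal (a - s) < \<phi> t \<or> ennreal (1 - t) < \<psi> s"
    if "0 < t" "t \<le> 1" "0 < s" "s \<le> a" for t s
  proof (rule ccontr)
    assume "\<not> ?thesis"
    then have h1: "\<phi> t \<le> ennreal (a - s)" and h2: "\<psi> s \<le> ennreal (1 - t)" by auto
    have "\<not> E_spans (ERect a 1 \<union> ERect 1 a) f g A"
    proof (rule no_span[OF clA bA qA sX sY Xb[OF \<open>0<s\<close>] Yb[OF \<open>0<t\<close>] a0], rule disjI2, rule conjI)
      fix u v :: real assume uv: "0 \<le> u" "0 \<le> v" "u \<notin> {u. ennreal s < q u}" "v \<notin> {v. ennreal t < p v}"
      have "emeasure lborel {u. ennreal s < q u} + emeasure lborel {x. (x, v) \<in> A} + ennreal (f v)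
          = \<psi> s + p v" using pv[OF uv(2)] unfolding \<psi>_def by (simp add: ac_simps)
      also have "\<dots> \<le> ennreal (1 - t + t)" using uv h2 that by (intro enn_sum_le) auto
      finally show "emeasure lborel {u. ennreal s < q u} + emeasure lborel {x. (x, v) \<in> A} + ennreal (f v) \<le> ennreal 1" by simp
      have "emeasure lborel {v. ennreal t < p v} + emeasure lborel {y. (u, y) \<in> A} + ennreal (g u)
          = \<phi> t + q u" using qu[OF uv(1)] unfolding \<phi>_def by (simp add: ac_simps)
      also have "\<dots> \<le> ennreal (a - s + s)" using uv h1 that by (intro enn_sum_le) auto
      finally show "emeasure lborel {v. ennreal t < p v} + emeasure lborel {y. (u, y) \<in> A} + ennreal (g u) \<le> ennreal a" by simp
    qed
    with sp show False by blast
  qed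
  have I1: "ennreal a \<le> (\<integral>\<^sup>+ t. \<psi> t * indicator {0<..1} t \<partial>lborel) + 1 + (\<integral>\<^sup>+ s. \<phi> s * indicator {1<..a} s \<partial>lborel)"
    by (rule core[OF m\<phi> m\<psi> a1 C1])
  have I2: "ennreal a \<le> (\<integral>\<^sup>+ t. \<phi> t * indicator {0<..1} t \<partial>lborel) + 1 + (\<integral>\<^sup>+ s. \<psi> s * indicator {1<..a} s \<partial>lborel)"
    by (rule core[OF m\<psi> m\<phi> a1 C2])
  have split: "(\<integral>\<^sup>+ t. h t * indicator {0<..1} t \<partial>lborel) + (\<integral>\<^sup>+ s. h s * indicator {1<..a} s \<partial>lborel)
      \<le> (\<integral>\<^sup>+ t. h t * indicator {0<..} t \<partial>lborel)" if [measurable]: "h \<in> borel_measurable lborel" for h :: "real \<Rightarrow> ennreal"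
  proof -
    have "(\<integral>\<^sup>+ t. h t * indicator {0<..1} t \<partial>lborel) + (\<integral>\<^sup>+ s. h s * indicator {1<..a} s \<partial>lborel)
        = (\<integral>\<^sup>+ t. h t * indicator {0<..1} t + h t * indicator {1<..a} t \<partial>lborel)"
      by (rule nn_integral_add[symmetric]) measurable
    also have "\<dots> \<le> (\<integral>\<^sup>+ t. h t * indicator {0<..} t \<partial>lborel)"
      by (rule nn_integral_mono) (auto simp: indicator_def)
    finally show ?thesis .
  qed
  have intp: "(\<integral>\<^sup>+ v. p v \<partial>lborel) = ennreal (integral {0..} f) + emeasure lborel A"
  proof -
    have "(\<integral>\<^sup>+ v. p v \<partial>lborel) = (\<integral>\<^sup>+ v. ennreal (f (max v 0)) * indicator {0..} v \<partial>lborel) + (\<integral>\<^sup>+ v. emeasure lborel {x. (x,v)\<in>A} \<partial>lborel)"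
      unfolding p_def by (rule nn_integral_add) measurable
    also have "(\<integral>\<^sup>+ v. ennreal (f (max v 0)) * indicator {0..} v \<partial>lborel) = (\<integral>\<^sup>+ v. ennreal (f v) * indicator {0..} v \<partial>lborel)"
      by (rule nn_integral_cong) (auto simp: indicator_def max_def)
    finally show ?thesis using adm_integral(3)[OF af] row_int(1)[OF clA] by simp
  qed
  have intq: "(\<integral>\<^sup>+ v. q v \<partial>lborel) = ennreal (integral {0..} g) + emeasure lborel A"
  proof -
    have "(\<integral>\<^sup>+ v. q v \<partial>lborel) = (\<integral>\<^sup>+ v. ennreal (g (max v 0)) * indicator {0..} v \<partial>lborel) + (\<integral>\<^sup>+ u. emeasure lborel {y. (u,y)\<in>A} \<partial>lborel)"
      unfolding q_def by (rule nn_integral_add) measurable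
    also have "(\<integral>\<^sup>+ v. ennreal (g (max v 0)) * indicator {0..} v \<partial>lborel) = (\<integral>\<^sup>+ v. ennreal (g v) * indicator {0..} v \<partial>lborel)"
      by (rule nn_integral_cong) (auto simp: indicator_def max_def)
    finally show ?thesis using adm_integral(3)[OF ag] row_int(2)[OF clA] by simp
  qed
  have mA: "emeasure lborel A = ennreal (measure lborel A)"
    using emeasure_compact_finite[OF cA] by (simp add: emeasure_eq_ennreal_measure)
  define F where "F = integral {0..} f"
  define G where "G = integral {0..} g"
  define m where "m = measure lborel A"
  have F0: "0 \<le> F" "0 \<le> G" "0 \<le> m" using adm_integral(2)[OF af] adm_integral(2)[OF ag]
    unfolding F_def G_def m_def by auto
  have P: "(\<integral>\<^sup>+ t. \<phi> t * indicator {0<..1} t \<partial>lborel) + (\<integral>\<^sup>+ s. \<phi> s * indicator {1<..a} s \<partial>lborel) \<le> ennreal (F + m)"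
    using split[OF m\<phi>] layer[OF mp] intp mA F0 unfolding \<phi>_def F_def m_def by (simp add: ennreal_plus)
  have Q: "(\<integral>\<^sup>+ t. \<psi> t * indicator {0<..1} t \<partial>lborel) + (\<integral>\<^sup>+ s. \<psi> s * indicator {1<..a} s \<partial>lborel) \<le> ennreal (G + m)"
    using split[OF m\<psi>] layer[OF mq] intq mA F0 unfolding \<psi>_def G_def m_def by (simp add: ennreal_plus)
  have "ennreal a + ennreal a \<le> ((\<integral>\<^sup>+ t. \<psi> t * indicator {0<..1} t \<partial>lborel) + (\<integral>\<^sup>+ s. \<psi> s * indicator {1<..a} s \<partial>lborel))
      + ((\<integral>\<^sup>+ t. \<phi> t * indicator {0<..1} t \<partial>lborel) + (\<integral>\<^sup>+ s. \<phi> s * indicator {1<..a} s \<partial>lborel)) + 2"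
    using add_mono[OF I1 I2] by (simp add: ac_simps one_add_one[symmetric] del: one_add_one)
  also have "\<dots> \<le> ennreal (G + m) + ennreal (F + m) + ennreal 2"
    using add_mono[OF add_mono[OF Q P], of 2 "ennreal 2"] by simp
  also have "\<dots> = ennreal (G + m + (F + m) + 2)"
  proof -
    have e1: "ennreal (G+m) + ennreal (F+m) = ennreal (G+m+(F+m))" using F0 by (intro ennreal_plus[symmetric]) auto
    have e2: "ennreal (G+m+(F+m)) + ennreal 2 = ennreal (G+m+(F+m)+2)" using F0 by (intro ennreal_plus[symmetric]) auto
    show ?thesis by (simp only: e1 e2)
  qed
  finally have "ennreal a + ennreal a \<le> ennreal (G + m + (F + m) + 2)" .
  moreover have "ennreal a + ennreal a = ennreal (a + a)" using a0 by (intro ennreal_plus[symmetric]) auto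
  ultimately have "ennreal (a + a) \<le> ennreal (G + m + (F + m) + 2)" by simp
  moreover have nn: "0 \<le> G + m + (F + m) + 2" using F0 by simp
  ultimately have "a + a \<le> G + m + (F + m) + 2" using ennreal_le_iff[OF nn] by blast
  then show ?thesis unfolding F_def G_def m_def by simp
qed



lemma in_zset_real:
  assumes "0 \<le> x" "0 \<le> y"
  shows "in_zset (ERect a 1 \<union> ERect 1 a) (ennreal x) (ennreal y) \<longleftrightarrow> (x \<le> a \<and> y \<le> 1) \<or> (x \<le> 1 \<and> y \<le> a)"
  using assms unfolding in_zset_def ERect_def by auto

lemma not_in_big1: "a < r \<Longrightarrow> 1 \<le> a \<Longrightarrow> \<not> in_zset (ERect a 1 \<union> ERect 1 a) (ennreal r) y"
  unfolding in_zset_def ERect_def by auto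

lemma not_in_big2: "a < r \<Longrightarrow> 1 \<le> a \<Longrightarrow> \<not> in_zset (ERect a 1 \<union> ERect 1 a) x (ennreal r)"
  unfolding in_zset_def ERect_def by auto

definition fd :: "real \<Rightarrow> real \<Rightarrow> real \<Rightarrow> real" where
  "fd a d x = (if 0 \<le> x \<and> x \<le> 1 + d then a - 1 + d else 0)"

lemma fd_adm:
  assumes "2 \<le> a" "0 < d"
  shows "admissible_fn (fd a d)"
  unfolding admissible_fn_def
proof (intro conjI allI impI)
  fix x :: real assume "0 \<le> x" then show "0 \<le> fd a d x" using assms by (simp add: fd_def)
next
  fix x y :: real assume "0 \<le> x" "x \<le> y" then show "fd a d y \<le> fd a d x" using assms by (simp add: fd_def)
next
  fix x :: real assume x: "0 < x"
  show "(fd a d \<longlongrightarrow> fd a d x) (at_left x)"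
  proof (cases "x \<le> 1 + d")
    case True
    have "eventually (\<lambda>y. y \<in> {0<..<x}) (at_left x)" using x by (rule eventually_at_left_real)
    then have "eventually (\<lambda>y. fd a d y = fd a d x) (at_left x)"
      by eventually_elim (use True x in \<open>auto simp: fd_def\<close>)
    then show ?thesis by (rule tendsto_eventually)
  next
    case False
    have "eventually (\<lambda>y. y \<in> {1+d<..<x}) (at_left x)" using False by (intro eventually_at_left_real) auto
    then have "eventually (\<lambda>y. fd a d y = fd a d x) (at_left x)"
      by eventually_elim (use False x in \<open>auto simp: fd_def\<close>)
    then show ?thesis by (rule tendsto_eventually)
  qed
next
  show "\<exists>M. \<forall>x\<ge>M. fd a d x = 0" by (intro exI[of _ "2 + d"]) (auto simp: fd_def)
qed

lemma fd_int:
  assumes "0 < d"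
  shows "integral {0..} (fd a d) = (a - 1 + d) * (1 + d)"
proof -
  have "((\<lambda>x. a - 1 + d) has_integral (measure lborel {0..1+d} *\<^sub>R (a - 1 + d))) {0..1+d}" by blast
  then have "(fd a d has_integral (measure lborel {0..1+d} *\<^sub>R (a - 1 + d))) {0..1+d}"
    by (rule has_integral_eq[rotated]) (auto simp: fd_def)
  then have "(fd a d has_integral (measure lborel {0..1+d} *\<^sub>R (a - 1 + d))) {0..}"
    by (rule has_integral_on_superset) (auto simp: fd_def)
  then show ?thesis using assms by (simp add: integral_unique)
qed

lemma fd_span:
  assumes a2: "2 \<le> a" and d: "0 < d" "d \<le> 1"
  shows "E_spans (ERect a 1 \<union> ERect 1 a) (fd a d) (fd a d) {}"
proof -
  let ?Z = "ERect a 1 \<union> ERect 1 a"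
  let ?T = "ET ?Z (fd a d) (fd a d)"
  define Q where "Q = {(u,v). 0 \<le> u \<and> u \<le> 1 + d \<and> 0 \<le> v \<and> v \<le> 1 + d}"
  define L where "L = {(u,v). 0 \<le> u \<and> 0 \<le> v \<and> (u \<le> 1 + d \<or> v \<le> 1 + d)}"
  have fv: "0 \<le> fd a d v" for v using a2 d by (simp add: fd_def)
  have T1: "?T {} = Q"
  proof (rule set_eqI)
    fix p :: "real \<times> real"
    obtain u v where p: "p = (u,v)" by (cases p)
    have "p \<in> ?T {} \<longleftrightarrow> 0 \<le> u \<and> 0 \<le> v \<and> \<not> in_zset ?Z (ennreal (fd a d v)) (ennreal (fd a d u))"
      unfolding ET_def Erow_def Ecol_def p by simp
    also have "\<dots> \<longleftrightarrow> p \<in> Q"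
    proof -
      have iz: "in_zset ?Z (ennreal (fd a d v)) (ennreal (fd a d u)) \<longleftrightarrow> (fd a d v \<le> a \<and> fd a d u \<le> 1) \<or> (fd a d v \<le> 1 \<and> fd a d u \<le> a)"
        by (rule in_zset_real[OF fv fv])
      show ?thesis unfolding iz using a2 d unfolding Q_def p by (auto simp: fd_def)
    qed
    finally show "p \<in> ?T {} \<longleftrightarrow> p \<in> Q" .
  qed
  have rowQ: "Erow (u,v) Q = (if 0 \<le> v \<and> v \<le> 1 + d then ennreal (1 + d) else 0)" for u v
  proof -
    have "{x. (x, v) \<in> Q} = (if 0 \<le> v \<and> v \<le> 1 + d then {0..1+d} else {})" unfolding Q_def by auto
    then show ?thesis unfolding Erow_def using d by simp
  qed
  have colQ: "Ecol (u,v) Q = (if 0 \<le> u \<and> u \<le> 1 + d then ennreal (1 + d) else 0)" for u v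
  proof -
    have "{y. (u, y) \<in> Q} = (if 0 \<le> u \<and> u \<le> 1 + d then {0..1+d} else {})" unfolding Q_def by auto
    then show ?thesis unfolding Ecol_def using d by simp
  qed
  have T2: "?T Q = L"
  proof (rule set_eqI)
    fix p :: "real \<times> real"
    obtain u v where p: "p = (u,v)" by (cases p)
    show "p \<in> ?T Q \<longleftrightarrow> p \<in> L"
    proof (cases "0 \<le> u \<and> 0 \<le> v")
      case False then show ?thesis unfolding ET_def L_def Q_def p by auto
    next
      case uv: True
      show ?thesis
      proof (cases "v \<le> 1 + d")
        case True
        have "Erow (u,v) Q + ennreal (fd a d v) = ennreal ((1 + d) + (a - 1 + d))"
        proof -
          have e1: "Erow (u,v) Q = ennreal (1 + d)" using True uv by (simp add: rowQ)
          have e2: "fd a d v = a - 1 + d" using True uv by (simp add: fd_def)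
          show ?thesis unfolding e1 e2 using d a2 by (intro ennreal_plus[symmetric]) auto
        qed
        moreover have "\<not> in_zset ?Z (ennreal ((1 + d) + (a - 1 + d))) y" for y
          using d a2 by (intro not_in_big1) auto
        ultimately have "p \<in> ?T Q" unfolding ET_def p using uv by auto
        then show ?thesis using True uv unfolding L_def p by auto
      next
        case False
        show ?thesis
        proof (cases "u \<le> 1 + d")
          case True
          have "Ecol (u,v) Q + ennreal (fd a d u) = ennreal ((1 + d) + (a - 1 + d))"
          proof -
            have e1: "Ecol (u,v) Q = ennreal (1 + d)" using True uv by (simp add: colQ)
            have e2: "fd a d u = a - 1 + d" using True uv by (simp add: fd_def)
            show ?thesis unfolding e1 e2 using d a2 by (intro ennreal_plus[symmetric]) auto
          qed
          moreover have "\<not> in_zset ?Z x (ennreal ((1 + d) + (a - 1 + d)))" for x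
            using d a2 by (intro not_in_big2) auto
          ultimately have "p \<in> ?T Q" unfolding ET_def p using uv by auto
          then show ?thesis using True uv unfolding L_def p by auto
        next
          case False2: False
          have "Erow (u,v) Q + ennreal (fd a d v) = ennreal 0" "Ecol (u,v) Q + ennreal (fd a d u) = ennreal 0"
            using False False2 by (auto simp: rowQ colQ fd_def)
          moreover have "in_zset ?Z (ennreal 0) (ennreal 0)"
            using in_zset_real[of 0 0 a] a2 by simp
          ultimately have "p \<notin> ?T Q" unfolding ET_def p Q_def using False by auto
          then show ?thesis using False False2 unfolding L_def p by auto
        qed
      qed
    qed
  qed
  have T3: "quadrant \<subseteq> ?T L"
  proof
    fix p :: "real \<times> real" assume pq: "p \<in> quadrant"
    obtain u v where p: "p = (u,v)" by (cases p)
    show "p \<in> ?T L"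
    proof (cases "p \<in> L")
      case True then show ?thesis unfolding ET_def by auto
    next
      case False
      with pq have uv: "0 \<le> u" "0 \<le> v" "u > 1 + d" "v > 1 + d" unfolding L_def quadrant_def p by auto
      have "{x. (x, v) \<in> L} = {0..1+d}" "{y. (u, y) \<in> L} = {0..1+d}" using uv unfolding L_def by auto
      then have "Erow (u,v) L + ennreal (fd a d v) = ennreal (1 + d)" "Ecol (u,v) L + ennreal (fd a d u) = ennreal (1 + d)"
        using uv d unfolding Erow_def Ecol_def by (auto simp: fd_def)
      moreover have "\<not> in_zset ?Z (ennreal (1 + d)) (ennreal (1 + d))"
        using in_zset_real[of "1+d" "1+d" a] d by simp
      ultimately show ?thesis unfolding ET_def p using uv by auto
    qed
  qed
  have sub: "(?T ^^ n) {} \<subseteq> quadrant" for n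
    by (induction n) (auto simp: ET_def quadrant_def)
  have "(?T ^^ 3) {} = ?T L" by (simp add: numeral_3_eq_3 T1 T2)
  then have "quadrant \<subseteq> (\<Union>n. (?T ^^ n) {})" using T3 by blast
  moreover have "(\<Union>n. (?T ^^ n) {}) \<subseteq> quadrant" using sub by blast
  ultimately show ?thesis unfolding E_spans_def by blast
qed



theorem mainTheorem17:
  fixes a \<alpha> :: real
  assumes "a \<ge> 2" and "0 \<le> \<alpha>" and "\<alpha> \<le> 1"
  shows "2 * (a - 1) * ((1 - \<alpha>) - 2 * (1 - \<alpha>)^2) \<le> EI \<alpha> \<alpha> (ERect a 1 \<union> ERect 1 a)
       \<and> EI \<alpha> \<alpha> (ERect a 1 \<union> ERect 1 a) \<le> 2 * (a - 1) * (1 - \<alpha>)"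
proof -
  let ?Z = "ERect a 1 \<union> ERect 1 a"
  define S where "S = {measure lborel A + (1 - \<alpha>) * integral {0..} f + (1 - \<alpha>) * integral {0..} g
      | A f g. compact A \<and> A \<subseteq> quadrant \<and> admissible_fn f \<and> admissible_fn g \<and> E_spans ?Z f g A}"
  have EI: "EI \<alpha> \<alpha> ?Z = Inf S" unfolding EI_def S_def by simp
  define \<epsilon> where "\<epsilon> = 1 - \<alpha>"
  have e0: "0 \<le> \<epsilon>" "\<epsilon> \<le> 1" using assms unfolding \<epsilon>_def by auto
  have a2: "2 \<le> a" using assms by simp
  have elem: "2 * (a - 1) * (\<epsilon> - 2 * \<epsilon>^2) \<le> x \<and> 0 \<le> x" if "x \<in> S" for x
  proof -
    from that obtain A f g where x: "x = measure lborel A + \<epsilon> * integral {0..} f + \<epsilon> * integral {0..} g"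
      and c: "compact A" "A \<subseteq> quadrant" "admissible_fn f" "admissible_fn g" "E_spans ?Z f g A"
      unfolding S_def \<epsilon>_def by blast
    define F where "F = integral {0..} f"
    define G where "G = integral {0..} g"
    define m where "m = measure lborel A"
    have key: "2 * a \<le> F + G + 2 * m + 2"
      unfolding F_def G_def m_def using lower_key[of a A f g] c a2 by simp
    have nn: "0 \<le> F" "0 \<le> G" "0 \<le> m"
      unfolding F_def G_def m_def using adm_integral(2) c by auto
    have x': "x = m + \<epsilon> * F + \<epsilon> * G" unfolding x F_def G_def m_def by simp
    have x0: "0 \<le> x" unfolding x' using nn e0 by simp
    have h1: "\<epsilon> * (2 * a - 2 - 2 * m) \<le> \<epsilon> * (F + G)"
      using key e0 by (intro mult_left_mono) auto
    show ?thesis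
    proof (cases "\<epsilon> \<le> 1/2")
      case True
      have "m * (1 - 2 * \<epsilon>) \<ge> 0" using True nn by simp
      moreover have "(a - 1) * \<epsilon>^2 \<ge> 0" using a2 by simp
      ultimately show ?thesis using x0 h1 unfolding x' by (simp add: algebra_simps power2_eq_square)
    next
      case False
      have hh: "\<epsilon> * (1 - 2 * \<epsilon>) \<le> 0" using False e0 by (intro mult_nonneg_nonpos) auto
      have a1': "0 \<le> a - 1" using a2 by simp
      have "(a - 1) * (\<epsilon> * (1 - 2 * \<epsilon>)) \<le> 0" by (rule mult_nonneg_nonpos[OF a1' hh])
      then show ?thesis using x0 by (simp add: algebra_simps power2_eq_square)
    qed
  qed
  have cons: "2 * \<epsilon> * ((a - 1 + d) * (1 + d)) \<in> S" if d: "0 < d" "d \<le> 1" for d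
  proof -
    have "measure lborel ({} :: (real \<times> real) set) + \<epsilon> * integral {0..} (fd a d) + \<epsilon> * integral {0..} (fd a d) \<in> S"
      unfolding S_def \<epsilon>_def mem_Collect_eq
      by (rule exI[of _ "{}"], rule exI[of _ "fd a d"], rule exI[of _ "fd a d"])
        (use fd_adm[OF a2 d(1)] fd_span[OF a2 d] in auto)
    then show ?thesis using fd_int[OF d(1), of a] by (simp add: algebra_simps)
  qed
  have ne: "S \<noteq> {}" using cons[of 1] by auto
  have bdd: "bdd_below S" using elem by (intro bdd_belowI[of _ 0]) auto
  have lower: "2 * (a - 1) * (\<epsilon> - 2 * \<epsilon>^2) \<le> Inf S"
    using elem ne by (intro cInf_greatest) auto
  have upper: "Inf S \<le> 2 * (a - 1) * \<epsilon>"
  proof (rule field_le_epsilon)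
    fix e :: real assume e: "0 < e"
    define d where "d = min 1 (e / (2 * (a + 1)))"
    have d: "0 < d" "d \<le> 1" "d \<le> e / (2 * (a + 1))" using e a2 unfolding d_def by auto
    have "Inf S \<le> 2 * \<epsilon> * ((a - 1 + d) * (1 + d))" using cons[OF d(1,2)] bdd by (rule cInf_lower)
    also have "\<dots> = 2 * (a - 1) * \<epsilon> + \<epsilon> * (2 * d * (a + d))" by (simp add: algebra_simps)
    also have "\<epsilon> * (2 * d * (a + d)) \<le> 1 * (2 * d * (a + 1))"
      using e0 d a2 by (intro mult_mono) auto
    also have "1 * (2 * d * (a + 1)) \<le> e"
      using d(3) a2 by (simp add: field_simps)
    finally show "Inf S \<le> 2 * (a - 1) * \<epsilon> + e" by simp
  qed
  show ?thesis using lower upper unfolding EI \<epsilon>_def by simp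
qed

end
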